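(* Let $\lambda>0$ and $\psi(r)=\frac\lambda2\,\mathrm{dist}(r,\mathbb Z)^2$, and let $y=\hat y+u$ with $u\in\dot{\mathscr W}^{1,2}$ be a locally stable equilibrium. Then $Dy_b\in\mathbb R\setminus(\tfrac12+\mathbb Z)$ for all $b\in\mathcal B$, and $$\sum_{b\in\mathcal B}\psi''(Dy_b)\,Dv_b^2\ge\lambda\|Dv\|_2^2\qquad\text{for all }v\in\dot{\mathscr W}^{1,2}.$$
   Context: $\mathsf R_6$ rotation by $\pi/3$, $a_1=(1,0)^T$, $a_i=\mathsf R_6^{i-1}a_1$, $\Lambda:=(\tfrac12,\tfrac{\sqrt3}{6})^T+\{ma_1+na_2:m,n\in\mathbb Z\}$. Bonds $\mathcal B=\{(\xi,\eta)\in\Lambda^2:|\xi-\eta|=1\}$ (ordered), $Dy_b=y(\eta)-y(\xi)$, $\|Dv\|_2=(\sum_{b\in\mathcal B}|Dv_b|^2)^{1/2}$. $\xi_0=(0,\sqrt3/3)^T$; $\mathscr W_0=\{v:\Lambda\to\mathbb R: v(\xi_0)=0,\ \{b:Dv_b\ne0\}$ bounded$\}$; $\dot{\mathscr W}^{1,2}=\{v: v(\xi_0)=0,\ Dv\in\ell^2(\mathcal B)\}$. $\hat y(x)=\frac1{2\pi}\arg(x)$ on $\Lambda$ (branch cut along the positive $x_1$-axis). For $w\in\mathscr W_0$, $E(y+w;y):=\sum_{b\in\mathcal B}[\psi(Dy_b+Dw_b)-\psi(Dy_b)]$. A displacement $y$ is a locally stable equilibrium if there exists $\epsilon>0$ with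 $E(y+w;y)\ge0$ for all $w\in\mathscr W_0$ with $\|Dw\|_2\le\epsilon$. *)

theory Defs
  imports "HOL-Analysis.Analysis"
begin

text \<open>The plane is identified with the complex numbers. a1 = 1, a2 = R6 a1 = cis(pi/3).\<close>

definition a1 :: complex where "a1 = 1"
definition a2 :: complex where "a2 = cis (pi / 3) * a1"

definition Lat :: "complex set" where
  "Lat = {Complex (1/2) (sqrt 3 / 6) + of_int m * a1 + of_int n * a2 | m n. True}"

definition Bonds :: "(complex \<times> complex) set" where
  "Bonds = {(\<xi>, \<eta>). \<xi> \<in> Lat \<and> \<eta> \<in> Lat \<and> cmod (\<xi> - \<eta>) = 1}"

definition Dif :: "(complex \<Rightarrow> real) \<Rightarrow> complex \<times> complex \<Rightarrow> real" where
  "Dif y b = y (snd b) - y (fst b)"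

definition norm2 :: "(complex \<Rightarrow> real) \<Rightarrow> real" where
  "norm2 v = sqrt (infsum (\<lambda>b. (Dif v b)^2) Bonds)"

definition xi0 :: complex where "xi0 = Complex 0 (sqrt 3 / 3)"

definition W0 :: "(complex \<Rightarrow> real) set" where
  "W0 = {v. v xi0 = 0 \<and> bounded {b \<in> Bonds. Dif v b \<noteq> 0}}"

definition W12 :: "(complex \<Rightarrow> real) set" where
  "W12 = {v. v xi0 = 0 \<and> (\<lambda>b. (Dif v b)^2) summable_on Bonds}"

definition arg0 :: "complex \<Rightarrow> real" where
  "arg0 z = (if Arg z \<ge> 0 then Arg z else Arg z + 2 * pi)"

definition yhat :: "complex \<Rightarrow> real" where
  "yhat x = arg0 x / (2 * pi)"

definition psi :: "real \<Rightarrow> real \<Rightarrow> real" where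
  "psi lam r = lam / 2 * (infdist r \<int>)^2"

definition Energy :: "(real \<Rightarrow> real) \<Rightarrow> (complex \<Rightarrow> real) \<Rightarrow> (complex \<Rightarrow> real) \<Rightarrow> real" where
  "Energy \<psi> w y = infsum (\<lambda>b. \<psi> (Dif y b + Dif w b) - \<psi> (Dif y b)) Bonds"

definition locally_stable :: "(real \<Rightarrow> real) \<Rightarrow> (complex \<Rightarrow> real) \<Rightarrow> bool" where
  "locally_stable \<psi> y \<longleftrightarrow> (\<exists>\<epsilon>>0. \<forall>w\<in>W0. norm2 w \<le> \<epsilon> \<longrightarrow> Energy \<psi> w y \<ge> 0)"

end

theory Submission
  imports Defs
begin


lemma infdist_geI: "A \<noteq> {} \<Longrightarrow> (\<And>a. a \<in> A \<Longrightarrow> d \<le> dist x a) \<Longrightarrow> d \<le> infdist x A"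
  unfolding infdist_def by (auto intro: cINF_greatest)

lemma infdist_attain: "\<exists>k::int. infdist (r::real) \<int> = \<bar>r - of_int k\<bar>"
proof -
  have ne: "(\<int>::real set) \<noteq> {}" using Ints_0 by blast
  obtain x where "x \<in> (\<int>::real set)" "infdist r \<int> = dist r x"
    using infdist_attains_inf[OF closed_Ints ne, of r] by blast
  then show ?thesis by (auto elim!: Ints_cases simp: dist_real_def)
qed

lemma infdist_half: "infdist (1/2 + of_int m :: real) \<int> = 1/2"
proof (rule antisym)
  show "infdist (1/2 + of_int m :: real) \<int> \<le> 1/2"
    using infdist_le[of "of_int m" "\<int>" "1/2 + of_int m :: real"] by (simp add: dist_real_def)
  show "1/2 \<le> infdist (1/2 + of_int m :: real) \<int>"
  proof (rule infdist_geI)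
    fix a :: real assume "a \<in> \<int>"
    then obtain j where j: "a = of_int j" by (auto elim: Ints_cases)
    have "j \<le> m \<or> j \<ge> m + 1" by auto
    then have "of_int j \<le> (of_int m::real) \<or> of_int j \<ge> (of_int m::real) + 1"
      by (metis of_int_le_iff of_int_add of_int_1)
    then show "1/2 \<le> dist (1/2 + of_int m) a" using j by (auto simp: dist_real_def)
  qed auto
qed

lemma infdist_local: assumes "\<bar>x - of_int k\<bar> < 1/2" shows "infdist (x::real) \<int> = \<bar>x - of_int k\<bar>"
proof (rule antisym)
  show "infdist x \<int> \<le> \<bar>x - of_int k\<bar>"
    using infdist_le[of "of_int k" "\<int>" x] by (simp add: dist_real_def)
  show "\<bar>x - of_int k\<bar> \<le> infdist x \<int>"
  proof (rule infdist_geI)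
    fix a :: real assume "a \<in> \<int>"
    then obtain j where j: "a = of_int j" by (auto elim: Ints_cases)
    have "j = k \<or> j \<le> k - 1 \<or> j \<ge> k + 1" by auto
    then have "of_int j = (of_int k::real) \<or> of_int j \<le> (of_int k::real) - 1 \<or> of_int j \<ge> (of_int k::real) + 1"
      by (metis of_int_le_iff of_int_add of_int_diff of_int_1)
    then show "\<bar>x - of_int k\<bar> \<le> dist x a" using j assms unfolding dist_real_def by (auto simp: abs_if split: if_splits)
  qed auto
qed

lemma psi_upper: "lam > 0 \<Longrightarrow> psi lam (x::real) \<le> lam/2 * (x - of_int k)^2"
proof -
  assume "lam > 0"
  have "infdist x \<int> \<le> \<bar>x - of_int k\<bar>"
    using infdist_le[of "of_int k" "\<int>" x] by (simp add: dist_real_def)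
  then have "(infdist x \<int>)^2 \<le> \<bar>x - of_int k\<bar>^2"
    using infdist_nonneg by (intro power_mono) auto
  then show ?thesis using \<open>lam > 0\<close> by (simp add: psi_def)
qed

lemma psi_step: assumes "lam > 0" "infdist r \<int> = \<bar>r - of_int k\<bar>"
  shows "psi lam (r + s) - psi lam r \<le> lam * (r - of_int k) * s + lam/2 * s^2"
proof -
  have "psi lam (r+s) \<le> lam/2 * (r + s - of_int k)^2" by (rule psi_upper[OF assms(1)])
  moreover have "psi lam r = lam/2 * (r - of_int k)^2" using assms(2) by (simp add: psi_def)
  ultimately show ?thesis by (simp add: power2_eq_square algebra_simps)
qed

lemma psi_half_step: assumes "lam > 0"
  shows "psi lam (1/2 + of_int m + s) - psi lam (1/2 + of_int m) \<le> lam/2 * (s^2 - \<bar>s\<bar>)"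
proof -
  have e: "psi lam (1/2 + of_int m) = lam/8" by (simp add: psi_def infdist_half power2_eq_square)
  have 1: "psi lam (1/2 + of_int m + s) \<le> lam/2 * (1/2 + of_int m + s - of_int m)^2"
    by (rule psi_upper[OF assms])
  have 2: "psi lam (1/2 + of_int m + s) \<le> lam/2 * (1/2 + of_int m + s - of_int (m+1))^2"
    by (rule psi_upper[OF assms])
  show ?thesis
  proof (cases "s \<ge> 0")
    case True
    then show ?thesis using 2 e by (simp add: power2_eq_square algebra_simps)
  next
    case False
    then show ?thesis using 1 e by (simp add: power2_eq_square algebra_simps)
  qed
qed

lemma a2_eq: "a2 = Complex (1/2) (sqrt 3 / 2)"
  by (simp add: a2_def a1_def complex_eq_iff cos_60 sin_60)

lemma lat_diff: assumes "\<xi> \<in> Lat" "\<eta> \<in> Lat"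
  shows "\<exists>p q. \<eta> - \<xi> = of_int p + of_int q * a2"
proof -
  from assms obtain m n m' n' where "\<xi> = Complex (1/2) (sqrt 3 / 6) + of_int m * a1 + of_int n * a2"
    "\<eta> = Complex (1/2) (sqrt 3 / 6) + of_int m' * a1 + of_int n' * a2"
    unfolding Lat_def by blast
  then have "\<eta> - \<xi> = of_int (m' - m) + of_int (n' - n) * a2" by (simp add: a1_def algebra_simps)
  then show ?thesis by blast
qed

lemma int_small: assumes "(of_int q :: real)^2 \<le> 4/3" shows "q \<in> {-1..1}"
proof -
  have "of_int (q^2) \<le> (4/3::real)" using assms by simp
  then have "q^2 < 2" by linarith
  then have "q^2 \<le> 1" by linarith
  then have "\<bar>q\<bar> \<le> 1" by (simp add: abs_square_le_1)
  then show ?thesis by auto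
qed



lemma neighbors_finite: assumes "\<xi> \<in> Lat" shows "finite {\<eta> \<in> Lat. cmod (\<xi> - \<eta>) = 1}"
proof -
  have "{\<eta> \<in> Lat. cmod (\<xi> - \<eta>) = 1} \<subseteq> (\<lambda>(p,q). \<xi> + of_int p + of_int q * a2) ` ({-2..2} \<times> {-1..1})"
  proof
    fix \<eta> assume h: "\<eta> \<in> {\<eta> \<in> Lat. cmod (\<xi> - \<eta>) = 1}"
    then obtain p q where pq: "\<eta> - \<xi> = of_int p + of_int q * a2" using lat_diff assms by blast
    have c1: "cmod (\<eta> - \<xi>) = 1" using h by (simp add: norm_minus_commute)
    have ce: "of_int p + of_int q * a2 = Complex (of_int p + of_int q / 2) (of_int q * sqrt 3 / 2)"
        by (simp add: a2_eq complex_eq_iff)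
    have "cmod (Complex (of_int p + of_int q / 2) (of_int q * sqrt 3 / 2)) = 1"
      using pq c1 ce by simp
    then have "sqrt ((of_int p + of_int q / 2)^2 + (of_int q * sqrt 3 / 2)^2) = (1::real)"
      by (simp only: complex_norm)
    then have E0: "(of_int p + of_int q / 2)^2 + (of_int q * sqrt 3 / 2)^2 = (1::real)"
      by (simp only: real_sqrt_eq_1_iff)
    have s3: "(of_int q * sqrt 3 / 2)^2 = 3/4 * (of_int q::real)^2"
      by (simp add: power_mult_distrib power_divide)
    have E: "(of_int p + of_int q / 2)^2 + 3/4 * (of_int q)^2 = (1::real)" using E0 s3 by simp
    have "(of_int q::real)^2 \<le> 4/3" using E zero_le_power2[of "of_int p + of_int q / 2::real"] by linarith
    then have q: "q \<in> {-1..1}" by (rule int_small)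
    have "(of_int p + of_int q / 2)^2 \<le> (1::real)" using E zero_le_power2[of "of_int q::real"] by linarith
    then have a1: "\<bar>of_int p + of_int q / 2\<bar> \<le> (1::real)" by (simp add: abs_square_le_1)
    have a2: "\<bar>of_int q::real\<bar> \<le> 1" using q by auto
    have "\<bar>of_int p::real\<bar> < 3" using a1 a2 by linarith
    then have "\<bar>p\<bar> < 3" by linarith
    then have pp: "p \<in> {-2..2}" by auto
    show "\<eta> \<in> (\<lambda>(p,q). \<xi> + of_int p + of_int q * a2) ` ({-2..2} \<times> {-1..1})"
    proof (rule image_eqI[where x="(p,q)"])
      show "\<eta> = (\<lambda>(p,q). \<xi> + of_int p + of_int q * a2) (p, q)" 
      proof -
        have "\<eta> = \<xi> + (of_int p + of_int q * a2)" using pq by (metis add.commute diff_add_cancel)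
        then show ?thesis by (simp add: add.assoc)
      qed
      show "(p, q) \<in> {-2..2} \<times> {-1..1}" using q pp by blast
    qed
  qed
  then show ?thesis by (rule finite_subset) auto
qed



lemma infsum_to_sum: assumes "finite S" "S \<subseteq> B" "\<And>b. b \<in> B - S \<Longrightarrow> f b = 0"
  shows "infsum f B = sum (f::_ \<Rightarrow> real) S"
proof -
  have "infsum f B = infsum f S" by (rule infsum_cong_neutral) (use assms in auto)
  then show ?thesis using assms(1) by simp
qed

lemma psi_ev: assumes "\<bar>x - of_int k\<bar> < 1/2"
  shows "eventually (\<lambda>y. psi lam y = lam/2 * (y - of_int k)^2) (nhds x)"
  unfolding eventually_nhds
proof (intro exI conjI ballI)
  show "open (ball (of_int k) (1/2::real))" by simp
  show "x \<in> ball (of_int k) (1/2)" using assms by (simp add: dist_real_def abs_minus_commute)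
  fix y assume "y \<in> ball (of_int k::real) (1/2)"
  then have "\<bar>y - of_int k\<bar> < 1/2" by (simp add: dist_real_def abs_minus_commute)
  then show "psi lam y = lam/2 * (y - of_int k)^2" by (simp add: psi_def infdist_local)
qed

lemma dpsi: assumes "\<bar>x - of_int k\<bar> < 1/2"
  shows "deriv (psi lam) x = lam * (x - of_int k)"
proof -
  have "deriv (psi lam) x = deriv (\<lambda>y. lam/2 * (y - of_int k)^2) x"
    by (rule deriv_cong_ev[OF psi_ev[OF assms]]) simp
  also have "\<dots> = lam * (x - of_int k)"
    by (rule DERIV_imp_deriv) (auto intro!: derivative_eq_intros)
  finally show ?thesis .
qed

lemma ddpsi: assumes "r \<notin> {1/2 + of_int k | k. True}"
  shows "deriv (deriv (psi lam)) r = lam"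
proof -
  define k where "k = \<lfloor>r + 1/2\<rfloor>"
  have "of_int k \<le> r + 1/2" "r + 1/2 < of_int k + 1" unfolding k_def by linarith+
  moreover have "r \<noteq> 1/2 + of_int (k - 1)" using assms by blast
  ultimately have "of_int k - 1/2 \<le> r" "r \<noteq> of_int k - 1/2" "r < of_int k + 1/2" by auto
  then have "of_int k - 1/2 < r" by (metis order_le_neq_trans)
  then have h: "\<bar>r - of_int k\<bar> < 1/2" using \<open>r < of_int k + 1/2\<close> by (simp only: abs_less_iff, intro conjI; linarith)
  have ev: "eventually (\<lambda>y. deriv (psi lam) y = lam * (y - of_int k)) (nhds r)"
    unfolding eventually_nhds
  proof (intro exI conjI ballI)
    show "open (ball (of_int k) (1/2::real))" by simp
    show "r \<in> ball (of_int k) (1/2)" using h by (simp add: dist_real_def abs_minus_commute)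
    fix y assume "y \<in> ball (of_int k::real) (1/2)"
    then have "\<bar>y - of_int k\<bar> < 1/2" by (simp add: dist_real_def abs_minus_commute)
    then show "deriv (psi lam) y = lam * (y - of_int k)" by (rule dpsi)
  qed
  have "deriv (deriv (psi lam)) r = deriv (\<lambda>y. lam * (y - of_int k)) r"
    by (rule deriv_cong_ev[OF ev]) simp
  also have "\<dots> = lam"
    by (rule DERIV_imp_deriv) (auto intro!: derivative_eq_intros)
  finally show ?thesis .
qed

lemma part2: assumes "\<forall>b\<in>Bonds. Dif y b \<notin> {1/2 + of_int k | k. True}"
  shows "infsum (\<lambda>b. deriv (deriv (psi lam)) (Dif y b) * (Dif v b)^2) Bonds \<ge> lam * (norm2 v)^2"
proof -
  have "infsum (\<lambda>b. deriv (deriv (psi lam)) (Dif y b) * (Dif v b)^2) Bonds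
      = infsum (\<lambda>b. lam * (Dif v b)^2) Bonds"
    by (rule infsum_cong) (use assms ddpsi in auto)
  also have "\<dots> = lam * infsum (\<lambda>b. (Dif v b)^2) Bonds" by (rule infsum_cmult_right')
  also have "infsum (\<lambda>b. (Dif v b)^2) Bonds = (norm2 v)^2"
    unfolding norm2_def by (simp add: infsum_nonneg)
  finally show ?thesis by simp
qed




lemma part1:
  assumes lam: "lam > 0" and st: "locally_stable (psi lam) y"
  shows "\<forall>b\<in>Bonds. Dif y b \<notin> {1/2 + of_int k | k. True}"
proof (rule ccontr)
  assume "\<not> ?thesis"
  then obtain b m where b: "b \<in> Bonds" "Dif y b = 1/2 + of_int m" by auto
  obtain p1 p2 where bp: "b = (p1, p2)" by (cases b)
  have p12: "p1 \<in> Lat" "p2 \<in> Lat" "cmod (p1 - p2) = 1" using b(1) bp by (auto simp: Bonds_def)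
  obtain \<xi> \<eta> m0 where b0: "(\<xi>,\<eta>) \<in> Bonds" "\<xi> \<noteq> xi0" "Dif y (\<xi>,\<eta>) = 1/2 + of_int m0"
  proof (cases "p1 = xi0")
    case False then show ?thesis using that[of p1 p2 m] b bp by auto
  next
    case True
    have "p2 \<noteq> p1" using p12 by auto
    then have "p2 \<noteq> xi0" using True by simp
    moreover have "(p2, p1) \<in> Bonds" using p12 by (auto simp: Bonds_def norm_minus_commute)
    moreover have "Dif y (p2, p1) = 1/2 + of_int (-m-1)" using b(2) bp by (simp add: Dif_def)
    ultimately show ?thesis using that by blast
  qed
  have xL: "\<xi> \<in> Lat" and neq: "\<eta> \<noteq> \<xi>" using b0(1) by (auto simp: Bonds_def)
  obtain \<epsilon> where eps: "\<epsilon> > 0" and epsP: "\<And>w. w \<in> W0 \<Longrightarrow> norm2 w \<le> \<epsilon> \<Longrightarrow> Energy (psi lam) w y \<ge> 0"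
    using st unfolding locally_stable_def by blast
  define S where "S = {b \<in> Bonds. fst b = \<xi> \<or> snd b = \<xi>}"
  define NB where "NB = {\<eta> \<in> Lat. cmod (\<xi> - \<eta>) = 1}"
  have "S \<subseteq> ({\<xi>} \<times> NB) \<union> (NB \<times> {\<xi>})"
    unfolding S_def NB_def Bonds_def by (auto simp: norm_minus_commute)
  moreover have "finite NB" unfolding NB_def by (rule neighbors_finite[OF xL])
  ultimately have finS: "finite S" by (meson finite_SigmaI finite_Un finite.emptyI finite_insert finite_subset)
  have SB: "S \<subseteq> Bonds" unfolding S_def by auto
  have b0S: "(\<xi>,\<eta>) \<in> S" using b0(1) unfolding S_def by auto
  define N where "N = card S"
  have N1: "N \<ge> 1" unfolding N_def using finS b0S by (metis One_nat_def Suc_leI card_gt_0_iff empty_iff)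
  define \<sigma> where "\<sigma> b = (if snd b = \<xi> then 1 else 0) - (if fst b = \<xi> then 1 else (0::real))" for b :: "complex \<times> complex"
  have \<sigma>sq: "(\<sigma> b)^2 \<le> 1" for b unfolding \<sigma>_def by auto
  have \<sigma>out: "\<sigma> b = 0" if "b \<in> Bonds - S" for b using that unfolding \<sigma>_def S_def by auto
  have \<sigma>b0: "\<sigma> (\<xi>,\<eta>) = -1" using neq unfolding \<sigma>_def by auto
  have "\<exists>K. \<forall>r. infdist r \<int> = \<bar>r - of_int (K r)\<bar>"
    by (rule choice) (rule allI, rule infdist_attain)
  then obtain K where K: "\<And>r. infdist r \<int> = \<bar>r - of_int (K r)\<bar>" by blast
  define A where "A = (\<Sum>b\<in>S-{(\<xi>,\<eta>)}. (Dif y b - of_int (K (Dif y b))) * \<sigma> b)"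
  define \<delta> where "\<delta> = min (1/(2*(real N+1))) (\<epsilon>/(real N+1))"
  have \<delta>0: "\<delta> > 0" unfolding \<delta>_def using eps by auto
  have \<delta>1: "\<delta> * (2*(real N+1)) \<le> 1" unfolding \<delta>_def
    by (smt (verit, del_insts) divide_pos_pos le_divide_eq min.cobounded1 of_nat_0_le_iff)
  have \<delta>2: "\<delta> * (real N+1) \<le> \<epsilon>" unfolding \<delta>_def
    by (smt (verit, del_insts) le_divide_eq min.cobounded2 of_nat_0_le_iff)
  define t where "t = (if A \<ge> 0 then -\<delta> else \<delta>)"
  have tA: "t * A \<le> 0" unfolding t_def by (auto simp: mult_le_0_iff \<delta>0 less_imp_le)
  have tabs: "\<bar>t\<bar> = \<delta>" and tsq: "t^2 = \<delta>^2" unfolding t_def using \<delta>0 by auto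
  define w where "w = (\<lambda>x. if x = \<xi> then t else (0::real))"
  have Dw: "Dif w b = t * \<sigma> b" for b unfolding Dif_def w_def \<sigma>_def by auto
  have wW0: "w \<in> W0"
  proof -
    have "w xi0 = 0" using b0(2) unfolding w_def by auto
    moreover have "{b \<in> Bonds. Dif w b \<noteq> 0} \<subseteq> cball \<xi> 1 \<times> cball \<xi> 1"
    proof
      fix b assume h: "b \<in> {b \<in> Bonds. Dif w b \<noteq> 0}"
      obtain a c where bac: "b = (a,c)" by (cases b)
      have "\<sigma> b \<noteq> 0" using h Dw by auto
      then have "a = \<xi> \<or> c = \<xi>" unfolding \<sigma>_def bac by (auto split: if_splits)
      moreover have "cmod (a - c) = 1" using h bac by (auto simp: Bonds_def)
      ultimately show "b \<in> cball \<xi> 1 \<times> cball \<xi> 1" unfolding bac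
        by (auto simp: dist_norm norm_minus_commute)
    qed
    then have "bounded {b \<in> Bonds. Dif w b \<noteq> 0}"
      by (rule bounded_subset[rotated]) (intro bounded_Times bounded_cball)
    ultimately show ?thesis unfolding W0_def by auto
  qed
  have wzero: "Dif w b = 0" if "b \<in> Bonds - S" for b using that Dw \<sigma>out by simp
  have "infsum (\<lambda>b. (Dif w b)^2) Bonds = (\<Sum>b\<in>S. (Dif w b)^2)"
    by (rule infsum_to_sum[OF finS SB]) (simp add: wzero)
  also have "\<dots> \<le> (\<Sum>b\<in>S. \<delta>^2)"
  proof (rule sum_mono)
    fix b show "(Dif w b)^2 \<le> \<delta>^2" using \<sigma>sq[of b] tsq \<delta>0
      by (simp add: Dw power_mult_distrib mult_left_le)
  qed
  also have "\<dots> = real N * \<delta>^2" unfolding N_def by simp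
  finally have nw: "infsum (\<lambda>b. (Dif w b)^2) Bonds \<le> real N * \<delta>^2" .
  have "real N * \<delta>^2 \<le> (\<delta> * (real N + 1))^2"
    by (simp add: power2_eq_square algebra_simps) (intro add_nonneg_nonneg mult_nonneg_nonneg; use \<delta>0 in simp)
  also have "\<dots> \<le> \<epsilon>^2" using \<delta>2 \<delta>0 by (intro power_mono) auto
  finally have "infsum (\<lambda>b. (Dif w b)^2) Bonds \<le> \<epsilon>^2" using nw by linarith
  then have "norm2 w \<le> \<epsilon>" unfolding norm2_def using eps
    by (metis abs_of_pos real_sqrt_abs real_sqrt_le_mono)
  then have E0: "Energy (psi lam) w y \<ge> 0" using epsP wW0 by blast
  define tm where "tm b = psi lam (Dif y b + Dif w b) - psi lam (Dif y b)" for b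
  have "Energy (psi lam) w y = infsum tm Bonds"
    unfolding Energy_def by (intro infsum_cong) (simp add: tm_def)
  also have "\<dots> = (\<Sum>b\<in>S. tm b)"
    by (rule infsum_to_sum[OF finS SB]) (simp add: wzero tm_def)
  also have "\<dots> = tm (\<xi>,\<eta>) + (\<Sum>b\<in>S-{(\<xi>,\<eta>)}. tm b)"
    using finS b0S by (simp add: sum.remove)
  also have "tm (\<xi>,\<eta>) \<le> lam/2 * (\<delta>^2 - \<delta>)"
  proof -
    have "tm (\<xi>,\<eta>) = psi lam (1/2 + of_int m0 + (-t)) - psi lam (1/2 + of_int m0)"
      unfolding tm_def b0(3) Dw \<sigma>b0 by simp
    also have "\<dots> \<le> lam/2 * ((-t)^2 - \<bar>-t\<bar>)" by (rule psi_half_step[OF lam])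
    finally show ?thesis using tsq tabs by simp
  qed
  also have "(\<Sum>b\<in>S-{(\<xi>,\<eta>)}. tm b) \<le> (\<Sum>b\<in>S-{(\<xi>,\<eta>)}. lam * t * ((Dif y b - of_int (K (Dif y b))) * \<sigma> b) + lam/2 * \<delta>^2)"
  proof (rule sum_mono)
    fix b
    have "tm b \<le> lam * (Dif y b - of_int (K (Dif y b))) * (t * \<sigma> b) + lam/2 * (t * \<sigma> b)^2"
      unfolding tm_def Dw by (rule psi_step[OF lam K])
    moreover have "(t * \<sigma> b)^2 \<le> \<delta>^2" using \<sigma>sq[of b] tsq \<delta>0
      by (simp add: power_mult_distrib mult_left_le)
    ultimately show "tm b \<le> lam * t * ((Dif y b - of_int (K (Dif y b))) * \<sigma> b) + lam/2 * \<delta>^2"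
      using lam by (smt (verit, ccfv_SIG) mult.assoc mult.left_commute mult_left_mono half_gt_zero)
  qed
  also have "\<dots> = lam * t * A + real (N - 1) * (lam/2 * \<delta>^2)"
    unfolding A_def N_def using finS b0S by (simp add: sum.distrib sum_distrib_left)
  finally have "Energy (psi lam) w y \<le> lam/2 * (\<delta>^2 - \<delta>) + (lam * t * A + real (N - 1) * (lam/2 * \<delta>^2))"
    by simp
  also have "\<dots> \<le> lam/2 * (real N * \<delta>^2 - \<delta>)"
  proof -
    have "lam * t * A \<le> 0" using tA lam by (simp add: mult.assoc mult_nonneg_nonpos)
    moreover have "real (N - 1) = real N - 1" using N1 by simp
    then have e1: "real (N - 1) * (lam/2 * \<delta>^2) = real N * (lam/2 * \<delta>^2) - lam/2 * \<delta>^2"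
      by (simp add: left_diff_distrib)
    have e2: "lam/2 * (real N * \<delta>^2 - \<delta>) = real N * (lam/2 * \<delta>^2) - lam/2 * \<delta>"
      by (simp add: algebra_simps)
    have e3: "lam/2 * (\<delta>^2 - \<delta>) = lam/2 * \<delta>^2 - lam/2 * \<delta>"
      by (simp add: algebra_simps)
    ultimately show ?thesis using e1 e2 e3 by linarith
  qed
  also have "\<dots> < 0"
  proof -
    have "real N * \<delta> \<le> 1/2" using \<delta>1 \<delta>0 by (simp add: algebra_simps)
    then have "real N * \<delta>^2 \<le> \<delta>/2" using \<delta>0 by (simp add: power2_eq_square)
    then have "real N * \<delta>^2 - \<delta> < 0" using \<delta>0 by linarith
    then show ?thesis using lam by (simp add: mult_pos_neg)
  qed
  finally show False using E0 by simp
qed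



theorem lemma3p4:
  fixes lam :: real and u :: "complex \<Rightarrow> real"
  assumes "lam > 0"
    and "u \<in> W12"
    and "locally_stable (psi lam) (\<lambda>x. yhat x + u x)"
  shows "(\<forall>b\<in>Bonds. Dif (\<lambda>x. yhat x + u x) b \<notin> {1/2 + of_int k | k. True})
       \<and> (\<forall>v\<in>W12. infsum (\<lambda>b. deriv (deriv (psi lam)) (Dif (\<lambda>x. yhat x + u x) b) * (Dif v b)^2) Bonds
              \<ge> lam * (norm2 v)^2)"
proof -
  have P1: "\<forall>b\<in>Bonds. Dif (\<lambda>x. yhat x + u x) b \<notin> {1/2 + of_int k | k. True}"
    by (rule part1[OF assms(1) assms(3)])
  show ?thesis using P1 part2[OF P1] by blast
qed

end
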